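(* Let $\mu>0$, $\mathbf X_0\in\mathbb R^{n\times p}$ arbitrary, and fix $r\in(0,1)$. Over the set $\Gamma\cap\{\mathbf w:\|\mathbf w\|\ge r\}$, the function $\mathbf w\mapsto\mathbf w^*\nabla^2g(\mathbf w;\mathbf X_0)\mathbf w/\|\mathbf w\|^2$ is $L$-Lipschitz with $$L\le\frac{16n^3}{\mu^2}\|\mathbf X_0\|_\infty^3+\frac{8n^{3/2}}{\mu r}\|\mathbf X_0\|_\infty^2+\frac{48n^{5/2}}{\mu}\|\mathbf X_0\|_\infty^2+96n^{5/2}\|\mathbf X_0\|_\infty.$$
   Context: $h_\mu(z)=\mu\log\cosh(z/\mu)$. For $\mathbf Y\in\mathbb R^{n\times p}$ with columns $\mathbf y_k$, $f(\mathbf q;\mathbf Y)=\frac1p\sum_k h_\mu(\mathbf q^*\mathbf y_k)$; for $\mathbf w$ in the open unit ball of $\mathbb R^{n-1}$, $\mathbf q(\mathbf w)=(\mathbf w,\sqrt{1-\|\mathbf w\|^2})$ and $g(\mathbf w;\mathbf Y)=f(\mathbf q(\mathbf w);\mathbf Y)$; $\nabla^2$ is the Hessian in $\mathbf w$. $\Gamma=\{\mathbf w\in\mathbb R^{n-1}:\|\mathbf w\|<\sqrt{(4n-1)/(4n)}\}$. $\|\mathbf X\|_\infty$ denotes the maximum absolute value of the entries of $\mathbf X$. Lipschitz is with respect to the Euclidean norm on $\mathbf w$. *)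

theory Defs
  imports "HOL-Analysis.Analysis"
begin

definition hmu :: "real \<Rightarrow> real \<Rightarrow> real" where
  "hmu \<mu> z = \<mu> * ln (cosh (z / \<mu>))"

text \<open>A matrix Y in R^(n x p) with n = CARD('m) + 1, p = CARD('p), is given in block form:
  A (the first n-1 rows, a real^'p^'m) and b (the last row, a real^'p).
  The k-th column of Y is y_k = (column k A, b$k).
  For w in R^(n-1), q(w) = (w, sqrt(1 - |w|^2)), so q(w)^* y_k = w . column k A + sqrt(1-|w|^2) b$k.\<close>
definition gfun :: "real \<Rightarrow> real^'p^'m \<Rightarrow> real^'p \<Rightarrow> real^'m \<Rightarrow> real" where
  "gfun \<mu> A b w = (1 / real CARD('p)) *
     (\<Sum>k\<in>UNIV. hmu \<mu> (w \<bullet> column k A + sqrt (1 - (norm w)\<^sup>2) * b $ k))"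

definition partial_at :: "(real^'m \<Rightarrow> real) \<Rightarrow> 'm \<Rightarrow> real^'m \<Rightarrow> real" where
  "partial_at f i w = deriv (\<lambda>t. f (w + t *\<^sub>R axis i 1)) 0"

definition hessian :: "(real^'m \<Rightarrow> real) \<Rightarrow> real^'m \<Rightarrow> real^'m^'m" where
  "hessian f w = (\<chi> i j. partial_at (\<lambda>v. partial_at f j v) i w)"

definition maxabs :: "real^'p^'m \<Rightarrow> real^'p \<Rightarrow> real" where
  "maxabs A b = max (Max {\<bar>A $ i $ k\<bar> | i k. True}) (Max {\<bar>b $ k\<bar> | k. True})"

end

theory Submission
  imports Defs
begin


lemma scalar_lip:
  fixes f f' :: "real \<Rightarrow> real"
  assumes der: "\<And>t. lo \<le> t \<Longrightarrow> t \<le> hi \<Longrightarrow> (f has_real_derivative f' t) (at t)"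
    and bd: "\<And>t. lo \<le> t \<Longrightarrow> t \<le> hi \<Longrightarrow> \<bar>f' t\<bar> \<le> B"
    and x: "lo \<le> x" "x \<le> hi" and y: "lo \<le> y" "y \<le> hi"
  shows "\<bar>f x - f y\<bar> \<le> B * \<bar>x - y\<bar>"
proof -
  have main: "\<bar>f v - f u\<bar> \<le> B * \<bar>v - u\<bar>" if "lo \<le> u" "u < v" "v \<le> hi" for u v
  proof -
    have "\<exists>z. u < z \<and> z < v \<and> f v - f u = (v - u) * f' z"
      by (rule MVT2) (use der that in auto)
    then obtain z where z: "u < z" "z < v" "f v - f u = (v - u) * f' z" by blast
    have "\<bar>f' z\<bar> \<le> B" using bd z that by auto
    then show ?thesis using z that by (simp add: abs_mult mult_right_mono mult.commute)
  qed
  show ?thesis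
  proof (cases x y rule: linorder_cases)
    case less then show ?thesis using main[of x y] x y by (simp add: abs_minus_commute)
  next
    case equal then show ?thesis using bd[of x] x by simp
  next
    case greater then show ?thesis using main[of y x] x y by simp
  qed
qed

definition h1 :: "real \<Rightarrow> real \<Rightarrow> real" where "h1 \<mu> z = tanh (z / \<mu>)"
definition h2 :: "real \<Rightarrow> real \<Rightarrow> real" where "h2 \<mu> z = (1 - (tanh (z / \<mu>))\<^sup>2) / \<mu>"

lemma hmu_deriv: "\<mu> > 0 \<Longrightarrow> (hmu \<mu> has_real_derivative h1 \<mu> z) (at z)"
  unfolding hmu_def[abs_def] h1_def
  by (auto intro!: derivative_eq_intros simp: tanh_def field_simps)

lemma h1_deriv: "\<mu> > 0 \<Longrightarrow> (h1 \<mu> has_real_derivative h2 \<mu> z) (at z)"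
  unfolding h1_def[abs_def] h2_def
  by (auto intro!: derivative_eq_intros simp: field_simps)

lemma h2_deriv: "\<mu> > 0 \<Longrightarrow> (h2 \<mu> has_real_derivative (- 2 * tanh (z/\<mu>) * (1 - (tanh (z / \<mu>))\<^sup>2) / \<mu>^2)) (at z)"
  unfolding h2_def[abs_def]
  by (auto intro!: derivative_eq_intros simp: field_simps power2_eq_square)

lemma tanh_sq_le: "(tanh (x::real))\<^sup>2 < 1"
  using tanh_real_bounds[of x] by (simp add: abs_square_less_1 abs_less_iff)

lemma h1_bd: "\<bar>h1 \<mu> z\<bar> \<le> 1"
  using tanh_real_bounds[of "z/\<mu>"] by (auto simp: h1_def)

lemma h2_bd: "\<mu> > 0 \<Longrightarrow> \<bar>h2 \<mu> z\<bar> \<le> 1 / \<mu>"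
  using tanh_sq_le[of "z/\<mu>"] by (auto simp: h2_def divide_right_mono)

lemma h1_lip: "\<mu> > 0 \<Longrightarrow> \<bar>h1 \<mu> x - h1 \<mu> y\<bar> \<le> (1/\<mu>) * \<bar>x - y\<bar>"
  by (rule scalar_lip[where lo="min x y" and hi="max x y" and f' = "h2 \<mu>"])
     (auto intro: h1_deriv h2_bd)

lemma h2_lip: assumes "\<mu> > 0" shows "\<bar>h2 \<mu> x - h2 \<mu> y\<bar> \<le> (2/\<mu>^2) * \<bar>x - y\<bar>"
proof (rule scalar_lip[where lo="min x y" and hi="max x y"])
  fix t
  show "(h2 \<mu> has_real_derivative (- 2 * tanh (t/\<mu>) * (1 - (tanh (t / \<mu>))\<^sup>2) / \<mu>^2)) (at t)"
    using h2_deriv assms by blast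
  have a: "\<bar>tanh (t/\<mu>)\<bar> \<le> 1" using tanh_real_bounds[of "t/\<mu>"] by auto
  have b: "0 \<le> 1 - (tanh (t / \<mu>))\<^sup>2" "1 - (tanh (t / \<mu>))\<^sup>2 \<le> 1" using tanh_sq_le[of "t/\<mu>"] by auto
  have "\<bar>tanh (t/\<mu>) * (1 - (tanh (t / \<mu>))\<^sup>2)\<bar> \<le> 1"
    using a b by (simp add: abs_mult mult_le_one)
  then show "\<bar>- 2 * tanh (t/\<mu>) * (1 - (tanh (t / \<mu>))\<^sup>2) / \<mu>^2\<bar> \<le> 2/\<mu>^2"
    using assms by (simp add: abs_mult divide_right_mono)
qed auto



definition zz :: "real^'p^'m \<Rightarrow> real^'p \<Rightarrow> 'p \<Rightarrow> real^'m \<Rightarrow> real" where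
  "zz A b k w = w \<bullet> column k A + sqrt (1 - (norm w)\<^sup>2) * b $ k"

lemma gfun_zz: fixes A :: "real^'p^'m" shows "gfun \<mu> A b w = (1 / real CARD('p)) * (\<Sum>k\<in>UNIV. hmu \<mu> (zz A b k w))"
  by (simp add: gfun_def zz_def)

lemma line_nth: "(v + t *\<^sub>R axis j 1) $ i = v$i + t * (if i = j then 1 else 0)"
  by (simp add: axis_def)

lemma line_inner: "(v + t *\<^sub>R axis j 1) \<bullet> (c::real^'m) = v \<bullet> c + t * c$j"
  by (simp add: inner_add_left inner_axis')

lemma line_norm: fixes v :: "real^'m" shows "(norm (v + t *\<^sub>R axis j 1))\<^sup>2 = (norm v)\<^sup>2 + 2 * t * v$j + t^2"
  by (simp only: power2_norm_eq_inner) (simp add: inner_add_left inner_add_right inner_axis inner_axis' inner_axis_axis inner_commute power2_eq_square algebra_simps)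

lemma zz_line: "zz A b k (v + t *\<^sub>R axis j 1) = v \<bullet> column k A + t * A$j$k + sqrt (1 - ((norm v)\<^sup>2 + 2 * t * v$j + t^2)) * b$k"
  by (simp add: zz_def line_inner line_norm column_def)

lemma zz_line_deriv:
  assumes "norm v < 1"
  shows "((\<lambda>t. zz A b k (v + t *\<^sub>R axis j 1)) has_real_derivative
            (A$j$k - v$j * b$k / sqrt (1 - (norm v)\<^sup>2))) (at 0)"
proof -
  have pos: "0 < 1 - (norm v)\<^sup>2" using assms by (simp add: abs_square_less_1)
  show ?thesis unfolding zz_line
    using pos by (auto intro!: derivative_eq_intros simp: field_simps)
qed



definition G1 :: "real \<Rightarrow> real^'p^'m \<Rightarrow> real^'p \<Rightarrow> 'm \<Rightarrow> real^'m \<Rightarrow> real" where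
  "G1 \<mu> A b j v = (1 / real CARD('p)) *
     (\<Sum>k\<in>UNIV. h1 \<mu> (zz A b k v) * (A$j$k - v$j * b$k / sqrt (1 - (norm v)\<^sup>2)))"

lemma partial_g:
  fixes A :: "real^'p^'m"
  assumes "norm v < 1" "\<mu> > 0"
  shows "partial_at (gfun \<mu> A b) j v = G1 \<mu> A b j v"
  unfolding partial_at_def
proof (rule DERIV_imp_deriv)
  have "((\<lambda>t. (1 / real CARD('p)) * (\<Sum>k\<in>UNIV. hmu \<mu> (zz A b k (v + t *\<^sub>R axis j 1))))
     has_real_derivative G1 \<mu> A b j v) (at 0)"
    unfolding G1_def
    apply (rule DERIV_cmult)
    apply (rule DERIV_sum)
    using DERIV_chain2[OF hmu_deriv[OF assms(2)] zz_line_deriv[OF assms(1)]]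
    by simp
  then show "((\<lambda>t. gfun \<mu> A b (v + t *\<^sub>R axis j 1)) has_real_derivative G1 \<mu> A b j v) (at 0)"
    by (simp add: gfun_zz)
qed

lemma fac_deriv0:
  fixes w :: "real^'m"
  assumes "norm w < 1"
  shows "((\<lambda>t. c - (w$j + t * d) * bk / sqrt (1 - ((norm w)\<^sup>2 + 2 * t * w$i + t^2)))
     has_real_derivative
     (- bk * (d / sqrt (1 - (norm w)\<^sup>2) + w$j * w$i / (sqrt (1 - (norm w)\<^sup>2))^3))) (at 0)"
proof -
  have pos: "0 < 1 - (norm w)\<^sup>2" using assms by (simp add: abs_square_less_1)
  define s where "s = sqrt (1 - (norm w)\<^sup>2)"
  have s: "s > 0" "s^2 = 1 - (norm w)\<^sup>2" using pos by (auto simp: s_def)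
  show ?thesis
    using pos apply (auto intro!: derivative_eq_intros simp: pos)
    using s apply (simp add: abs_of_pos[OF pos] s(2)[symmetric])
    apply (simp add: field_simps power3_eq_cube power2_eq_square)
    done
qed

lemma fac_deriv:
  fixes w :: "real^'m"
  assumes "norm w < 1"
  shows "((\<lambda>t. A$j$k - (w + t *\<^sub>R axis i 1)$j * b$k / sqrt (1 - (norm (w + t *\<^sub>R axis i 1))\<^sup>2))
     has_real_derivative
     (- b$k * ((if j = i then 1 else 0) / sqrt (1 - (norm w)\<^sup>2) + w$j * w$i / (sqrt (1 - (norm w)\<^sup>2))^3))) (at 0)"
  using fac_deriv0[OF assms, of "A$j$k" j "if j = i then 1 else 0" "b$k" i]
  by (simp only: line_nth line_norm)



definition Hess :: "real \<Rightarrow> real^'p^'m \<Rightarrow> real^'p \<Rightarrow> real^'m \<Rightarrow> 'm \<Rightarrow> 'm \<Rightarrow> real" where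
  "Hess \<mu> A b w i j = (1 / real CARD('p)) *
     (\<Sum>k\<in>UNIV. h2 \<mu> (zz A b k w) * (A$i$k - w$i * b$k / sqrt (1 - (norm w)\<^sup>2))
                  * (A$j$k - w$j * b$k / sqrt (1 - (norm w)\<^sup>2))
        - h1 \<mu> (zz A b k w) * b$k * ((if j = i then 1 else 0) / sqrt (1 - (norm w)\<^sup>2)
                  + w$j * w$i / (sqrt (1 - (norm w)\<^sup>2))^3))"

lemma ev_ball:
  fixes w :: "real^'m"
  assumes "norm w < 1"
  shows "eventually (\<lambda>t. norm (w + t *\<^sub>R axis i 1) < 1) (nhds 0)"
  unfolding eventually_nhds_metric
proof (intro exI[of _ "1 - norm w"] conjI allI impI)
  show "0 < 1 - norm w" using assms by simp
  fix t :: real assume "dist t 0 < 1 - norm w"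
  then have "\<bar>t\<bar> < 1 - norm w" by simp
  moreover have "norm (w + t *\<^sub>R axis i 1) \<le> norm w + \<bar>t\<bar>"
    using norm_triangle_ineq[of w "t *\<^sub>R axis i (1::real)"] by simp
  ultimately show "norm (w + t *\<^sub>R axis i 1) < 1" by simp
qed

lemma hessian_eq:
  fixes A :: "real^'p^'m"
  assumes "norm w < 1" "\<mu> > 0"
  shows "hessian (gfun \<mu> A b) w $ i $ j = Hess \<mu> A b w i j"
proof -
  have "hessian (gfun \<mu> A b) w $ i $ j = deriv (\<lambda>t. partial_at (gfun \<mu> A b) j (w + t *\<^sub>R axis i 1)) 0"
    by (simp add: hessian_def partial_at_def)
  also have "\<dots> = Hess \<mu> A b w i j"
  proof (rule DERIV_imp_deriv)
    have D: "((\<lambda>t. G1 \<mu> A b j (w + t *\<^sub>R axis i 1)) has_real_derivative Hess \<mu> A b w i j) (at 0)"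
      unfolding G1_def Hess_def
      apply (rule DERIV_cmult)
      apply (rule DERIV_sum)
      apply (rule DERIV_mult[OF DERIV_chain2[OF h1_deriv[OF assms(2)] zz_line_deriv[OF assms(1)]]
                  fac_deriv[OF assms(1)], THEN DERIV_cong])
      apply (simp add: algebra_simps)
      done
    show "((\<lambda>t. partial_at (gfun \<mu> A b) j (w + t *\<^sub>R axis i 1)) has_real_derivative Hess \<mu> A b w i j) (at 0)"
      apply (rule DERIV_cong_ev[THEN iffD1, OF refl _ refl D])
      using ev_ball[OF assms(1), of i]
      by (rule eventually_mono) (simp add: partial_g assms(2))
  qed
  finally show ?thesis .
qed



lemma quad_sum:
  fixes w \<alpha> :: "'m::finite \<Rightarrow> real"
  shows "(\<Sum>i\<in>UNIV. w i * (\<Sum>j\<in>UNIV. (c1 * \<alpha> i * \<alpha> j - c2 * ((if j = i then 1 else 0) * e + w j * w i * e3)) * w j))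
       = c1 * (\<Sum>i\<in>UNIV. w i * \<alpha> i)^2 - c2 * (e * (\<Sum>i\<in>UNIV. w i * w i) + e3 * (\<Sum>i\<in>UNIV. w i * w i)^2)"
proof -
  have "(\<Sum>i\<in>UNIV. w i * (\<Sum>j\<in>UNIV. (c1 * \<alpha> i * \<alpha> j - c2 * ((if j = i then 1 else 0) * e + w j * w i * e3)) * w j))
     = (\<Sum>i\<in>UNIV. (c1 * (w i * \<alpha> i) * (\<Sum>j\<in>UNIV. w j * \<alpha> j) - c2 * (e * (w i * w i) + e3 * (w i * w i) * (\<Sum>j\<in>UNIV. w j * w j))))"
  proof (rule sum.cong[OF refl])
    fix i
    have "(\<Sum>j\<in>UNIV. (c1 * \<alpha> i * \<alpha> j - c2 * ((if j = i then 1 else 0) * e + w j * w i * e3)) * w j)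
      = (\<Sum>j\<in>UNIV. c1 * \<alpha> i * (w j * \<alpha> j) - (if j = i then c2 * e * w j else 0) - c2 * e3 * w i * (w j * w j))"
      by (rule sum.cong) (auto simp: algebra_simps)
    also have "\<dots> = c1 * \<alpha> i * (\<Sum>j\<in>UNIV. w j * \<alpha> j) - c2 * e * w i - c2 * e3 * w i * (\<Sum>j\<in>UNIV. w j * w j)"
      by (simp add: sum_subtractf sum_distrib_left)
    finally have eq: "(\<Sum>j\<in>UNIV. (c1 * \<alpha> i * \<alpha> j - c2 * ((if j = i then 1 else 0) * e + w j * w i * e3)) * w j) = c1 * \<alpha> i * (\<Sum>j\<in>UNIV. w j * \<alpha> j) - c2 * e * w i - c2 * e3 * w i * (\<Sum>j\<in>UNIV. w j * w j)" .
    show "w i * (\<Sum>j\<in>UNIV. (c1 * \<alpha> i * \<alpha> j - c2 * ((if j = i then 1 else 0) * e + w j * w i * e3)) * w j)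
       = c1 * (w i * \<alpha> i) * (\<Sum>j\<in>UNIV. w j * \<alpha> j) - c2 * (e * (w i * w i) + e3 * (w i * w i) * (\<Sum>j\<in>UNIV. w j * w j))"
      unfolding eq by (simp add: algebra_simps)
  qed
  also have "\<dots> = c1 * (\<Sum>i\<in>UNIV. w i * \<alpha> i)^2 - c2 * (e * (\<Sum>i\<in>UNIV. w i * w i) + e3 * (\<Sum>i\<in>UNIV. w i * w i)^2)"
    by (simp add: sum_subtractf sum.distrib sum_distrib_left sum_distrib_right power2_eq_square algebra_simps)
  finally show ?thesis .
qed



lemma triple_sum:
  fixes w :: "'m::finite \<Rightarrow> real" and T :: "'k \<Rightarrow> 'm \<Rightarrow> 'm \<Rightarrow> real"
  assumes "finite K"
  shows "(\<Sum>i\<in>UNIV. w i * (\<Sum>j\<in>UNIV. (c * (\<Sum>k\<in>K. T k i j)) * w j))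
       = c * (\<Sum>k\<in>K. (\<Sum>i\<in>UNIV. w i * (\<Sum>j\<in>UNIV. T k i j * w j)))"
proof -
  have "(\<Sum>i\<in>UNIV. w i * (\<Sum>j\<in>UNIV. (c * (\<Sum>k\<in>K. T k i j)) * w j))
      = (\<Sum>i\<in>UNIV. \<Sum>j\<in>UNIV. \<Sum>k\<in>K. c * (w i * T k i j * w j))"
    by (simp add: sum_distrib_left sum_distrib_right algebra_simps)
  also have "\<dots> = (\<Sum>i\<in>UNIV. \<Sum>k\<in>K. \<Sum>j\<in>UNIV. c * (w i * T k i j * w j))"
    by (rule sum.cong[OF refl]) (rule sum.swap)
  also have "\<dots> = (\<Sum>k\<in>K. \<Sum>i\<in>UNIV. \<Sum>j\<in>UNIV. c * (w i * T k i j * w j))"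
    by (rule sum.swap)
  also have "\<dots> = c * (\<Sum>k\<in>K. (\<Sum>i\<in>UNIV. w i * (\<Sum>j\<in>UNIV. T k i j * w j)))"
    by (simp add: sum_distrib_left sum_distrib_right algebra_simps)
  finally show ?thesis .
qed

definition cc :: "real^'p^'m \<Rightarrow> real^'p \<Rightarrow> 'p \<Rightarrow> real^'m \<Rightarrow> real" where
  "cc A b k w = (w \<bullet> column k A) / norm w - norm w * b$k / sqrt (1 - (norm w)\<^sup>2)"

definition FF :: "real \<Rightarrow> real^'p^'m \<Rightarrow> real^'p \<Rightarrow> real^'m \<Rightarrow> real" where
  "FF \<mu> A b w = (1 / real CARD('p)) *
     (\<Sum>k\<in>UNIV. h2 \<mu> (zz A b k w) * (cc A b k w)\<^sup>2 - h1 \<mu> (zz A b k w) * b$k / (sqrt (1 - (norm w)\<^sup>2))^3)"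

lemma rayleigh:
  fixes A :: "real^'p^'m" and w :: "real^'m"
  assumes w1: "norm w < 1" and w0: "w \<noteq> 0" and mu: "\<mu> > 0"
  shows "(w \<bullet> (hessian (gfun \<mu> A b) w *v w)) / (norm w)\<^sup>2 = FF \<mu> A b w"
proof -
  define s where "s = sqrt (1 - (norm w)\<^sup>2)"
  have pos: "0 < 1 - (norm w)\<^sup>2" using w1 by (simp add: abs_square_less_1)
  have s: "s > 0" "s^2 = 1 - (norm w)\<^sup>2" using pos by (auto simp: s_def)
  have rho: "norm w > 0" using w0 by simp
  have N2: "(\<Sum>i\<in>UNIV. w$i * w$i) = (norm w)\<^sup>2"
    by (simp add: power2_norm_eq_inner inner_vec_def)
  have Ncol: "(\<Sum>i\<in>UNIV. w$i * (A$i$k - w$i * b$k / s)) = w \<bullet> column k A - (norm w)\<^sup>2 * b$k / s" for k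
  proof -
    have "(\<Sum>i\<in>UNIV. w$i * (A$i$k - w$i * b$k / s)) = (\<Sum>i\<in>UNIV. w$i * A$i$k) - (\<Sum>i\<in>UNIV. w$i * w$i) * b$k / s"
    proof -
      have "(\<Sum>i\<in>UNIV. w$i * (A$i$k - w$i * b$k / s)) = (\<Sum>i\<in>UNIV. w$i * A$i$k - (w$i * w$i) * (b$k / s))"
        by (rule sum.cong) (auto simp: algebra_simps)
      also have "\<dots> = (\<Sum>i\<in>UNIV. w$i * A$i$k) - (\<Sum>i\<in>UNIV. w$i * w$i) * (b$k / s)"
        by (simp only: sum_subtractf sum_distrib_right)
      finally show ?thesis by simp
    qed
    then show ?thesis by (simp add: N2 inner_vec_def column_def)
  qed
  define T where "T k i j = h2 \<mu> (zz A b k w) * (A$i$k - w$i * b$k / s) * (A$j$k - w$j * b$k / s)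
        - h1 \<mu> (zz A b k w) * b$k * ((if j = i then 1 else 0) / s + w$j * w$i / s^3)" for k i j
  have "w \<bullet> (hessian (gfun \<mu> A b) w *v w) = (\<Sum>i\<in>UNIV. w$i * (\<Sum>j\<in>UNIV. hessian (gfun \<mu> A b) w $ i $ j * w$j))"
    by (simp add: inner_vec_def matrix_vector_mult_def)
  also have "\<dots> = (\<Sum>i\<in>UNIV. w$i * (\<Sum>j\<in>UNIV. ((1 / real CARD('p)) * (\<Sum>k\<in>UNIV. T k i j)) * w$j))"
    by (simp add: hessian_eq[OF w1 mu] Hess_def T_def s_def)
  also have "\<dots> = (1 / real CARD('p)) * (\<Sum>k\<in>UNIV. (\<Sum>i\<in>UNIV. w$i * (\<Sum>j\<in>UNIV. T k i j * w$j)))"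
    by (rule triple_sum) simp
  also have "\<dots> = (1 / real CARD('p)) * (\<Sum>k\<in>UNIV. (norm w)\<^sup>2 * (h2 \<mu> (zz A b k w) * (cc A b k w)\<^sup>2 - h1 \<mu> (zz A b k w) * b$k / s^3))"
  proof -
    have "(\<Sum>i\<in>UNIV. w$i * (\<Sum>j\<in>UNIV. T k i j * w$j)) = (norm w)\<^sup>2 * (h2 \<mu> (zz A b k w) * (cc A b k w)\<^sup>2 - h1 \<mu> (zz A b k w) * b$k / s^3)" for k
    proof -
      have "(\<Sum>i\<in>UNIV. w$i * (\<Sum>j\<in>UNIV. T k i j * w$j))
         = (\<Sum>i\<in>UNIV. w$i * (\<Sum>j\<in>UNIV. (h2 \<mu> (zz A b k w) * (A$i$k - w$i * b$k / s) * (A$j$k - w$j * b$k / s)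
             - (h1 \<mu> (zz A b k w) * b$k) * ((if j = i then 1 else 0) * (1/s) + w$j * w$i * (1/s^3))) * w$j))"
        unfolding T_def by (simp add: algebra_simps)
      also have "\<dots> = h2 \<mu> (zz A b k w) * (\<Sum>i\<in>UNIV. w$i * (A$i$k - w$i * b$k / s))^2
           - (h1 \<mu> (zz A b k w) * b$k) * ((1/s) * (\<Sum>i\<in>UNIV. w$i * w$i) + (1/s^3) * (\<Sum>i\<in>UNIV. w$i * w$i)^2)"
        by (rule quad_sum[of "\<lambda>i. w$i" "h2 \<mu> (zz A b k w)" "\<lambda>i. A$i$k - w$i * b$k / s"])
      also have "\<dots> = (norm w)\<^sup>2 * (h2 \<mu> (zz A b k w) * (cc A b k w)\<^sup>2 - h1 \<mu> (zz A b k w) * b$k / s^3)"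
      proof -
        define X where "X = w \<bullet> column k A"
        define \<rho> where "\<rho> = norm w"
        have rp: "\<rho> > 0" using rho by (simp add: \<rho>_def)
        have e1: "(X - \<rho>\<^sup>2 * b$k / s)\<^sup>2 = \<rho>\<^sup>2 * (X / \<rho> - \<rho> * b$k / s)\<^sup>2"
          using rp s by (simp add: field_simps power2_eq_square)
        have sr: "s^2 + \<rho>\<^sup>2 = 1" using s by (simp add: \<rho>_def)
        have "1/s * \<rho>\<^sup>2 + 1/s^3 * (\<rho>\<^sup>2)\<^sup>2 = \<rho>\<^sup>2 * (s^2 + \<rho>\<^sup>2) / s^3"
          using s by (simp add: field_simps power2_eq_square power3_eq_cube)
        then have e2: "1/s * \<rho>\<^sup>2 + 1/s^3 * (\<rho>\<^sup>2)\<^sup>2 = \<rho>\<^sup>2 / s^3" using sr by simp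
        have cc: "cc A b k w = X / \<rho> - \<rho> * b$k / s" by (simp add: cc_def X_def \<rho>_def s_def)
        show ?thesis
          unfolding Ncol N2 cc X_def[symmetric] \<rho>_def[symmetric] e1 e2
          by (simp add: algebra_simps)
      qed
      finally show ?thesis .
    qed
    then show ?thesis by simp
  qed
  finally have "w \<bullet> (hessian (gfun \<mu> A b) w *v w) = (norm w)\<^sup>2 * FF \<mu> A b w"
    by (simp add: FF_def s_def sum_distrib_left)
  then show ?thesis using rho by simp
qed


lemma sig_bounds:
  fixes n t :: real
  assumes n: "n \<ge> 2" and t: "0 \<le> t" "t < sqrt ((4*n-1)/(4*n))"
  shows "0 < sqrt (1 - t^2)" "1 / sqrt (1 - t^2) < 2 * sqrt n"
        "t / sqrt (1 - t^2) < sqrt (4*n-1)" "t < 1"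
proof -
  have Y: "0 \<le> (4*n-1)/(4*n)" using n by simp
  have t2: "t^2 < (4*n-1)/(4*n)"
    using power_strict_mono[OF t(2) t(1), of 2] real_sqrt_pow2[OF Y] by simp
  have s2: "1 - t^2 > 1/(4*n)" using t2 n by (simp add: field_simps)
  have s2': "4*n*(1 - t^2) > 1" using s2 n by (simp add: field_simps)
  have "1/(4*n) > 0" using n by simp
  then have sp: "1 - t^2 > 0" using s2 by linarith
  show "0 < sqrt (1 - t^2)" using sp by simp
  have e1: "(1 / sqrt (1 - t^2))^2 = 1/(1-t^2)" using sp by (simp add: power_divide)
  have n0: "0 \<le> n" using n by linarith
  have e2: "(2 * sqrt n)^2 = 4*n" using n0 by (simp add: power_mult_distrib)
  have "1/(1-t^2) < 4*n" using s2' sp by (simp add: field_simps)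
  then have "(1 / sqrt (1 - t^2))^2 < (2 * sqrt n)^2" using e1 e2 by simp
  moreover have "0 \<le> 2 * sqrt n" using n0 by simp
  ultimately show "1 / sqrt (1 - t^2) < 2 * sqrt n"
    by (rule power2_less_imp_less)
  have e3: "(t / sqrt (1 - t^2))^2 = t^2/(1-t^2)" using sp by (simp add: power_divide)
  have e4: "(sqrt (4*n-1))^2 = 4*n-1" using n by simp
  have "4*n*t^2 < 4*n-1" using t2 n by (simp add: field_simps)
  then have "t^2/(1-t^2) < 4*n-1" using sp by (simp add: field_simps)
  then have "(t / sqrt (1 - t^2))^2 < (sqrt (4*n-1))^2" using e3 e4 by simp
  moreover have "0 \<le> sqrt (4*n-1)" using n by simp
  ultimately show "t / sqrt (1 - t^2) < sqrt (4*n-1)"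
    by (rule power2_less_imp_less)
  have "t^2 < 1" using sp by simp
  then have "\<bar>t\<bar> < 1" by (simp add: abs_square_less_1)
  then show "t < 1" by simp
qed
lemma sig_deriv: "0 < 1 - t^2 \<Longrightarrow> ((\<lambda>t. sqrt (1 - t^2)) has_real_derivative (- (t / sqrt (1 - t^2)))) (at t)"
  by (auto intro!: derivative_eq_intros simp: field_simps)

lemma phi1_deriv: "0 < 1 - t^2 \<Longrightarrow> ((\<lambda>t. t / sqrt (1 - t^2)) has_real_derivative (1 / sqrt (1 - t^2))^3) (at t)"
proof -
  assume pos: "0 < 1 - t^2"
  define s where "s = sqrt (1 - t^2)"
  have s: "s > 0" "s^2 = 1 - t^2" using pos by (auto simp: s_def)
  show ?thesis
    using pos apply (auto intro!: derivative_eq_intros)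
    using s apply (simp add: s_def[symmetric] s(2)[symmetric])
    using s apply (simp add: field_simps power3_eq_cube power2_eq_square)
    done
qed

lemma P_deriv: "0 < 1 - t^2 \<Longrightarrow> ((\<lambda>t. 1 / (sqrt (1 - t^2))^3) has_real_derivative 3 * t * (1 / sqrt (1 - t^2))^5) (at t)"
proof -
  assume pos: "0 < 1 - t^2"
  define s where "s = sqrt (1 - t^2)"
  have s: "s > 0" "s^2 = 1 - t^2" using pos by (auto simp: s_def)
  show ?thesis
    using pos apply (auto intro!: derivative_eq_intros)
    using s apply (simp add: s_def[symmetric] s(2)[symmetric])
    using s apply (simp add: field_simps eval_nat_numeral)
    done
qed

lemma radial_lips:
  fixes n x y :: real
  assumes n: "n \<ge> 2" and x: "0 \<le> x" "x < sqrt ((4*n-1)/(4*n))" and y: "0 \<le> y" "y < sqrt ((4*n-1)/(4*n))"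
  shows "\<bar>sqrt (1 - x^2) - sqrt (1 - y^2)\<bar> \<le> sqrt (4*n-1) * \<bar>x - y\<bar>"
    "\<bar>x / sqrt (1 - x^2) - y / sqrt (1 - y^2)\<bar> \<le> (2 * sqrt n)^3 * \<bar>x - y\<bar>"
    "\<bar>1 / (sqrt (1 - x^2))^3 - 1 / (sqrt (1 - y^2))^3\<bar> \<le> 3 * (2 * sqrt n)^5 * \<bar>x - y\<bar>"
proof -
  define hi where "hi = max x y"
  have B: "0 < sqrt (1 - t^2)" "1 / sqrt (1 - t^2) < 2 * sqrt n"
        "t / sqrt (1 - t^2) < sqrt (4*n-1)" "t < 1" "0 < 1 - t^2" if "0 \<le> t" "t \<le> hi" for t
  proof -
    have "t < sqrt ((4*n-1)/(4*n))" using that x y by (auto simp: hi_def)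
    note sb = sig_bounds[OF n that(1) this]
    then show "0 < sqrt (1 - t^2)" "1 / sqrt (1 - t^2) < 2 * sqrt n"
        "t / sqrt (1 - t^2) < sqrt (4*n-1)" "t < 1" by auto
    show "0 < 1 - t^2" using sb(1) by simp
  qed
  have xy: "0 \<le> x" "x \<le> hi" "0 \<le> y" "y \<le> hi" using x y by (auto simp: hi_def)
  show "\<bar>sqrt (1 - x^2) - sqrt (1 - y^2)\<bar> \<le> sqrt (4*n-1) * \<bar>x - y\<bar>"
  proof (rule scalar_lip[where lo=0 and hi=hi, OF _ _ xy])
    fix t assume t: "0 \<le> t" "t \<le> hi"
    show "((\<lambda>t. sqrt (1 - t^2)) has_real_derivative (- (t / sqrt (1 - t^2)))) (at t)"
      using sig_deriv B(5)[OF t] .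
    show "\<bar>- (t / sqrt (1 - t^2))\<bar> \<le> sqrt (4*n-1)"
      using B[OF t] t by simp
  qed
  show "\<bar>x / sqrt (1 - x^2) - y / sqrt (1 - y^2)\<bar> \<le> (2 * sqrt n)^3 * \<bar>x - y\<bar>"
  proof (rule scalar_lip[where lo=0 and hi=hi, OF _ _ xy])
    fix t assume t: "0 \<le> t" "t \<le> hi"
    show "((\<lambda>t. t / sqrt (1 - t^2)) has_real_derivative (1 / sqrt (1 - t^2))^3) (at t)"
      using phi1_deriv B(5)[OF t] .
    have "(1 / sqrt (1 - t^2))^3 \<le> (2 * sqrt n)^3"
      using B[OF t] by (intro power_mono) auto
    then show "\<bar>(1 / sqrt (1 - t^2))^3\<bar> \<le> (2 * sqrt n)^3"
      using B[OF t] by simp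
  qed
  show "\<bar>1 / (sqrt (1 - x^2))^3 - 1 / (sqrt (1 - y^2))^3\<bar> \<le> 3 * (2 * sqrt n)^5 * \<bar>x - y\<bar>"
  proof (rule scalar_lip[where lo=0 and hi=hi, OF _ _ xy])
    fix t assume t: "0 \<le> t" "t \<le> hi"
    show "((\<lambda>t. 1 / (sqrt (1 - t^2))^3) has_real_derivative 3 * t * (1 / sqrt (1 - t^2))^5) (at t)"
      using P_deriv B(5)[OF t] .
    have p5: "(1 / sqrt (1 - t^2))^5 \<le> (2 * sqrt n)^5"
      using B[OF t] by (intro power_mono) auto
    have "3 * t * (1 / sqrt (1 - t^2))^5 \<le> 3 * 1 * (2 * sqrt n)^5"
      using p5 B[OF t] t by (intro mult_mono) auto
    then show "\<bar>3 * t * (1 / sqrt (1 - t^2))^5\<bar> \<le> 3 * (2 * sqrt n)^5"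
      using B[OF t] t by simp
  qed
qed

lemma comb1:
  fixes a1 a2 c1 c2 :: real
  assumes "\<bar>a1\<bar> \<le> Ba" "\<bar>a1 - a2\<bar> \<le> La * D" "\<bar>c1\<bar> \<le> Bc" "\<bar>c2\<bar> \<le> Bc" "\<bar>c1 - c2\<bar> \<le> Lc * D"
  shows "\<bar>a1 * c1^2 - a2 * c2^2\<bar> \<le> (Ba * (2 * Bc) * Lc + Bc^2 * La) * D"
proof -
  have e: "a1 * c1^2 - a2 * c2^2 = a1 * (c1 + c2) * (c1 - c2) + c2^2 * (a1 - a2)"
    by (simp add: algebra_simps power2_eq_square)
  have Bc: "0 \<le> Bc" using assms(3) by simp
  have Ba: "0 \<le> Ba" using assms(1) by simp
  have s: "\<bar>c1 + c2\<bar> \<le> 2 * Bc" using assms(3,4) by simp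
  have t1: "\<bar>a1 * (c1 + c2) * (c1 - c2)\<bar> \<le> Ba * (2 * Bc) * (Lc * D)"
    unfolding abs_mult by (intro mult_mono assms s) (auto simp: Ba Bc)
  have c2: "\<bar>c2\<bar>^2 \<le> Bc^2" using assms(4) by (intro power_mono) auto
  have t2: "\<bar>c2^2 * (a1 - a2)\<bar> \<le> Bc^2 * (La * D)"
    unfolding abs_mult power_abs by (intro mult_mono assms c2) auto
  have "\<bar>a1 * c1^2 - a2 * c2^2\<bar> \<le> \<bar>a1 * (c1 + c2) * (c1 - c2)\<bar> + \<bar>c2^2 * (a1 - a2)\<bar>"
    unfolding e by (rule abs_triangle_ineq)
  also have "\<dots> \<le> Ba * (2 * Bc) * (Lc * D) + Bc^2 * (La * D)" using t1 t2 by simp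
  finally show ?thesis by (simp add: algebra_simps)
qed

lemma comb2:
  fixes e1 e2 \<beta> P1 P2 :: real
  assumes "\<bar>e1\<bar> \<le> 1" "\<bar>e1 - e2\<bar> \<le> Le * D" "\<bar>\<beta>\<bar> \<le> M" "\<bar>P1 - P2\<bar> \<le> LP * D" "\<bar>P2\<bar> \<le> BP"
  shows "\<bar>e1 * \<beta> * P1 - e2 * \<beta> * P2\<bar> \<le> (M * LP + M * BP * Le) * D"
proof -
  have e: "e1 * \<beta> * P1 - e2 * \<beta> * P2 = \<beta> * (e1 * (P1 - P2)) + \<beta> * P2 * (e1 - e2)"
    by (simp add: algebra_simps)
  have M: "0 \<le> M" using assms(3) by simp
  have BP: "0 \<le> BP" using assms(5) by simp
  have t1: "\<bar>\<beta> * (e1 * (P1 - P2))\<bar> \<le> M * (1 * (LP * D))"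
    unfolding abs_mult by (intro mult_mono assms) (auto simp: M)
  have t2: "\<bar>\<beta> * P2 * (e1 - e2)\<bar> \<le> M * BP * (Le * D)"
    unfolding abs_mult by (intro mult_mono assms) (auto simp: M BP)
  have "\<bar>e1 * \<beta> * P1 - e2 * \<beta> * P2\<bar> \<le> \<bar>\<beta> * (e1 * (P1 - P2))\<bar> + \<bar>\<beta> * P2 * (e1 - e2)\<bar>"
    unfolding e by (rule abs_triangle_ineq)
  also have "\<dots> \<le> M * (1 * (LP * D)) + M * BP * (Le * D)" using t1 t2 by simp
  finally show ?thesis by (simp add: algebra_simps)
qed



lemma maxabs_bounds:
  fixes A :: "real^'p^'m" and b :: "real^'p"
  shows "\<bar>A$i$k\<bar> \<le> maxabs A b" "\<bar>b$k\<bar> \<le> maxabs A b" "0 \<le> maxabs A b"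
proof -
  have f1: "finite {\<bar>A $ i $ k\<bar> | i k. True}"
  proof -
    have "{\<bar>A $ i $ k\<bar> | i k. True} = (\<lambda>(i,k). \<bar>A $ i $ k\<bar>) ` UNIV" by auto
    then show ?thesis by simp
  qed
  have f2: "finite {\<bar>b $ k\<bar> | k. True}"
  proof -
    have "{\<bar>b $ k\<bar> | k. True} = (\<lambda>k. \<bar>b $ k\<bar>) ` UNIV" by auto
    then show ?thesis by simp
  qed
  have "\<bar>A$i$k\<bar> \<le> Max {\<bar>A $ i $ k\<bar> | i k. True}" by (rule Max_ge[OF f1]) blast
  then show "\<bar>A$i$k\<bar> \<le> maxabs A b" unfolding maxabs_def by linarith
  have "\<bar>b$k\<bar> \<le> Max {\<bar>b $ k\<bar> | k. True}" by (rule Max_ge[OF f2]) blast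
  then show "\<bar>b$k\<bar> \<le> maxabs A b" unfolding maxabs_def by linarith
  then show "0 \<le> maxabs A b" by (rule order_trans[OF abs_ge_zero])
qed

lemma norm_column_le:
  fixes A :: "real^'p^'m" and b :: "real^'p"
  shows "norm (column k A) \<le> sqrt (real CARD('m)) * maxabs A b"
proof -
  have "(norm (column k A))^2 = (\<Sum>i\<in>UNIV. A$i$k * A$i$k)"
    by (simp add: power2_norm_eq_inner inner_vec_def column_def)
  also have "\<dots> \<le> (\<Sum>i\<in>(UNIV::'m set). (maxabs A b)^2)"
  proof (rule sum_mono)
    fix i
    have "\<bar>A$i$k\<bar>^2 \<le> (maxabs A b)^2" by (rule power_mono[OF maxabs_bounds(1)]) simp
    then show "A$i$k * A$i$k \<le> (maxabs A b)^2" by (simp add: power2_eq_square)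
  qed
  also have "\<dots> = (sqrt (real CARD('m)) * maxabs A b)^2" by (simp add: power_mult_distrib)
  finally show ?thesis
    by (rule power2_le_imp_le) (use maxabs_bounds(3)[of A b] in auto)
qed

lemma unit_dir:
  fixes x y :: "'a::real_inner"
  assumes "norm x \<ge> r" "norm y \<ge> r" "r > 0"
  shows "norm (x /\<^sub>R norm x - y /\<^sub>R norm y) \<le> norm (x - y) / r"
proof -
  have key: "norm (u /\<^sub>R norm u - v /\<^sub>R norm v) \<le> norm (u - v) / r"
    if u: "r \<le> norm u" "norm u \<le> norm v" for u v :: 'a
  proof -
    have nu: "norm u > 0" using u assms(3) by linarith
    have nv: "norm v > 0" using u assms(3) by linarith
    define t where "t = norm v / norm u"
    have t1: "t \<ge> 1" using u nu by (simp add: t_def)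
    define v' where "v' = (norm u / norm v) *\<^sub>R v"
    have nv': "norm v' = norm u" using nv nu by (simp add: v'_def)
    have vv: "v = t *\<^sub>R v'" using nu nv by (simp add: v'_def t_def)
    have cs: "u \<bullet> v' \<le> (norm u)^2"
      using norm_cauchy_schwarz[of u v'] nv' by (simp add: power2_eq_square)
    have vi: "v' \<bullet> v' = u \<bullet> u" using nv' by (metis power2_norm_eq_inner)
    have a: "(norm (u - t *\<^sub>R v'))^2 = (norm u)^2 - 2*t*(u \<bullet> v') + t^2*(norm u)^2"
      using vi by (simp only: power2_norm_eq_inner) (simp add: vi inner_diff_left inner_diff_right inner_commute algebra_simps power2_eq_square)
    have b: "(norm (u - v'))^2 = (norm u)^2 - 2*(u \<bullet> v') + (norm u)^2"
      using vi by (simp only: power2_norm_eq_inner) (simp add: vi inner_diff_left inner_diff_right inner_commute algebra_simps power2_eq_square)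
    have "(norm (u - v))^2 - (norm (u - v'))^2 = (t^2 - 1) * (norm u)^2 - 2 * (t - 1) * (u \<bullet> v')"
      unfolding vv a b by (simp add: algebra_simps)
    also have "\<dots> = (t - 1) * ((t + 1) * (norm u)^2 - 2 * (u \<bullet> v'))" by (simp add: algebra_simps power2_eq_square)
    also have "\<dots> \<ge> 0"
    proof -
      have "2 * (norm u)^2 \<le> (t + 1) * (norm u)^2" using t1 by (intro mult_right_mono) auto
      then have "(t + 1) * (norm u)^2 - 2 * (u \<bullet> v') \<ge> 0" using cs by linarith
      then show ?thesis using t1 by simp
    qed
    finally have "(norm (u - v'))^2 \<le> (norm (u - v))^2" by simp
    then have d: "norm (u - v') \<le> norm (u - v)" by (rule power2_le_imp_le) simp
    have "u /\<^sub>R norm u - v /\<^sub>R norm v = (1 / norm u) *\<^sub>R (u - v')"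
      using nu nv by (simp add: v'_def scaleR_diff_right divide_inverse_commute)
    then have "norm (u /\<^sub>R norm u - v /\<^sub>R norm v) = norm (u - v') / norm u"
      using nu by simp
    also have "\<dots> \<le> norm (u - v) / norm u" using d nu by (simp add: divide_right_mono)
    also have "\<dots> \<le> norm (u - v) / r" using u assms(3) by (simp add: frac_le)
    finally show ?thesis .
  qed
  show ?thesis
  proof (cases "norm x \<le> norm y")
    case True then show ?thesis using key assms by blast
  next
    case False
    then have "norm (y /\<^sub>R norm y - x /\<^sub>R norm x) \<le> norm (y - x) / r" using key assms by simp
    then show ?thesis by (simp add: norm_minus_commute)
  qed
qed



lemma zz_lip:
  fixes A :: "real^'p^'m" and b :: "real^'p" and x y :: "real^'m"
  defines "n \<equiv> real CARD('m) + 1"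
  assumes x: "norm x < sqrt ((4*n-1)/(4*n))" and y: "norm y < sqrt ((4*n-1)/(4*n))"
  shows "\<bar>zz A b k x - zz A b k y\<bar> \<le> ((sqrt (real CARD('m)) + sqrt (4*n-1)) * maxabs A b) * norm (x - y)"
proof -
  have n: "n \<ge> 2" unfolding n_def by simp
  have e: "zz A b k x - zz A b k y = (x - y) \<bullet> column k A + (sqrt (1 - (norm x)^2) - sqrt (1 - (norm y)^2)) * b$k"
    by (simp add: zz_def inner_diff_left algebra_simps)
  have t1: "\<bar>(x - y) \<bullet> column k A\<bar> \<le> sqrt (real CARD('m)) * maxabs A b * norm (x - y)"
  proof -
    have "\<bar>(x - y) \<bullet> column k A\<bar> \<le> norm (x - y) * norm (column k A)" by (rule Cauchy_Schwarz_ineq2)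
    also have "\<dots> \<le> norm (x - y) * (sqrt (real CARD('m)) * maxabs A b)"
      by (rule mult_left_mono[OF norm_column_le]) simp
    finally show ?thesis by (simp add: algebra_simps)
  qed
  have s: "\<bar>sqrt (1 - (norm x)^2) - sqrt (1 - (norm y)^2)\<bar> \<le> sqrt (4*n-1) * \<bar>norm x - norm y\<bar>"
    by (rule radial_lips(1)[OF n _ x _ y]) simp_all
  also have "\<dots> \<le> sqrt (4*n-1) * norm (x - y)"
    by (rule mult_left_mono[OF norm_triangle_ineq3]) (use n in simp)
  finally have s2: "\<bar>sqrt (1 - (norm x)^2) - sqrt (1 - (norm y)^2)\<bar> \<le> sqrt (4*n-1) * norm (x - y)" .
  have t2: "\<bar>(sqrt (1 - (norm x)^2) - sqrt (1 - (norm y)^2)) * b$k\<bar> \<le> sqrt (4*n-1) * norm (x - y) * maxabs A b"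
    unfolding abs_mult by (rule mult_mono[OF s2 maxabs_bounds(2)]) (use n in auto)
  have "\<bar>zz A b k x - zz A b k y\<bar> \<le> \<bar>(x - y) \<bullet> column k A\<bar> + \<bar>(sqrt (1 - (norm x)^2) - sqrt (1 - (norm y)^2)) * b$k\<bar>"
    unfolding e by (rule abs_triangle_ineq)
  also have "\<dots> \<le> sqrt (real CARD('m)) * maxabs A b * norm (x - y) + sqrt (4*n-1) * norm (x - y) * maxabs A b"
    using t1 t2 by linarith
  finally show ?thesis by (simp add: algebra_simps)
qed

lemma cc_bound:
  fixes A :: "real^'p^'m" and b :: "real^'p" and x :: "real^'m"
  defines "n \<equiv> real CARD('m) + 1"
  assumes x: "norm x < sqrt ((4*n-1)/(4*n))" and x0: "x \<noteq> 0"
  shows "\<bar>cc A b k x\<bar> \<le> (sqrt (real CARD('m)) + sqrt (4*n-1)) * maxabs A b"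
proof -
  have n: "n \<ge> 2" unfolding n_def by simp
  have nx: "norm x > 0" using x0 by simp
  note sb = sig_bounds[OF n norm_ge_zero x]
  have t1: "\<bar>(x \<bullet> column k A) / norm x\<bar> \<le> sqrt (real CARD('m)) * maxabs A b"
  proof -
    have "\<bar>x \<bullet> column k A\<bar> \<le> norm x * norm (column k A)" by (rule Cauchy_Schwarz_ineq2)
    then have "\<bar>(x \<bullet> column k A) / norm x\<bar> \<le> norm (column k A)"
      using nx by (simp add: field_simps)
    then show ?thesis using norm_column_le[of k A b] by linarith
  qed
  have t2: "\<bar>norm x * b$k / sqrt (1 - (norm x)\<^sup>2)\<bar> \<le> sqrt (4*n-1) * maxabs A b"
  proof -
    have "\<bar>norm x * b$k / sqrt (1 - (norm x)\<^sup>2)\<bar> = (norm x / sqrt (1 - (norm x)\<^sup>2)) * \<bar>b$k\<bar>"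
      using sb(1) by (simp add: abs_mult)
    also have "\<dots> \<le> sqrt (4*n-1) * maxabs A b"
      by (rule mult_mono[OF less_imp_le[OF sb(3)] maxabs_bounds(2)]) (use n in auto)
    finally show ?thesis .
  qed
  show ?thesis unfolding cc_def
    using abs_triangle_ineq4[of "(x \<bullet> column k A) / norm x" "norm x * b$k / sqrt (1 - (norm x)\<^sup>2)"] t1 t2
    by (simp add: algebra_simps)
qed



lemma cc_lip:
  fixes A :: "real^'p^'m" and b :: "real^'p" and x y :: "real^'m"
  defines "n \<equiv> real CARD('m) + 1"
  assumes x: "norm x < sqrt ((4*n-1)/(4*n))" "r \<le> norm x" and y: "norm y < sqrt ((4*n-1)/(4*n))" "r \<le> norm y"
    and r: "r > 0"
  shows "\<bar>cc A b k x - cc A b k y\<bar> \<le> (sqrt (real CARD('m)) * maxabs A b / r + (2 * sqrt n)^3 * maxabs A b) * norm (x - y)"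
proof -
  have n: "n \<ge> 2" unfolding n_def by simp
  have nx: "norm x > 0" "norm y > 0" using x y r by linarith+
  have M: "0 \<le> maxabs A b" by (rule maxabs_bounds(3))
  have e: "cc A b k x - cc A b k y = (x /\<^sub>R norm x - y /\<^sub>R norm y) \<bullet> column k A
      - b$k * (norm x / sqrt (1 - (norm x)\<^sup>2) - norm y / sqrt (1 - (norm y)\<^sup>2))"
    by (simp add: cc_def inner_diff_left algebra_simps divide_inverse)
  have t1: "\<bar>(x /\<^sub>R norm x - y /\<^sub>R norm y) \<bullet> column k A\<bar> \<le> sqrt (real CARD('m)) * maxabs A b / r * norm (x - y)"
  proof -
    have "\<bar>(x /\<^sub>R norm x - y /\<^sub>R norm y) \<bullet> column k A\<bar> \<le> norm (x /\<^sub>R norm x - y /\<^sub>R norm y) * norm (column k A)"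
      by (rule Cauchy_Schwarz_ineq2)
    also have "\<dots> \<le> (norm (x - y) / r) * (sqrt (real CARD('m)) * maxabs A b)"
      by (rule mult_mono[OF unit_dir[OF x(2) y(2) r] norm_column_le]) (use r in auto)
    finally show ?thesis by (simp add: algebra_simps)
  qed
  have p: "\<bar>norm x / sqrt (1 - (norm x)\<^sup>2) - norm y / sqrt (1 - (norm y)\<^sup>2)\<bar> \<le> (2 * sqrt n)^3 * \<bar>norm x - norm y\<bar>"
    by (rule radial_lips(2)[OF n _ x(1) _ y(1)]) simp_all
  also have "\<dots> \<le> (2 * sqrt n)^3 * norm (x - y)"
    by (rule mult_left_mono[OF norm_triangle_ineq3]) (use n in simp)
  finally have p2: "\<bar>norm x / sqrt (1 - (norm x)\<^sup>2) - norm y / sqrt (1 - (norm y)\<^sup>2)\<bar> \<le> (2 * sqrt n)^3 * norm (x - y)" .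
  have t2: "\<bar>b$k * (norm x / sqrt (1 - (norm x)\<^sup>2) - norm y / sqrt (1 - (norm y)\<^sup>2))\<bar> \<le> maxabs A b * ((2 * sqrt n)^3 * norm (x - y))"
    unfolding abs_mult by (rule mult_mono[OF maxabs_bounds(2) p2]) (use M in auto)
  have "\<bar>cc A b k x - cc A b k y\<bar> \<le> \<bar>(x /\<^sub>R norm x - y /\<^sub>R norm y) \<bullet> column k A\<bar>
      + \<bar>b$k * (norm x / sqrt (1 - (norm x)\<^sup>2) - norm y / sqrt (1 - (norm y)\<^sup>2))\<bar>"
    unfolding e by (rule abs_triangle_ineq4)
  also have "\<dots> \<le> sqrt (real CARD('m)) * maxabs A b / r * norm (x - y) + maxabs A b * ((2 * sqrt n)^3 * norm (x - y))"
    using t1 t2 by linarith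
  finally show ?thesis by (simp add: algebra_simps)
qed

lemma P_lip:
  fixes x y :: "real^'m"
  defines "n \<equiv> real CARD('m) + 1"
  assumes x: "norm x < sqrt ((4*n-1)/(4*n))" and y: "norm y < sqrt ((4*n-1)/(4*n))"
  shows "\<bar>1 / (sqrt (1 - (norm x)\<^sup>2))^3 - 1 / (sqrt (1 - (norm y)\<^sup>2))^3\<bar> \<le> (3 * (2 * sqrt n)^5) * norm (x - y)"
    "\<bar>1 / (sqrt (1 - (norm y)\<^sup>2))^3\<bar> \<le> (2 * sqrt n)^3"
proof -
  have n: "n \<ge> 2" unfolding n_def by simp
  have "\<bar>1 / (sqrt (1 - (norm x)\<^sup>2))^3 - 1 / (sqrt (1 - (norm y)\<^sup>2))^3\<bar> \<le> 3 * (2 * sqrt n)^5 * \<bar>norm x - norm y\<bar>"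
    by (rule radial_lips(3)[OF n _ x _ y]) simp_all
  also have "\<dots> \<le> 3 * (2 * sqrt n)^5 * norm (x - y)"
    by (rule mult_left_mono[OF norm_triangle_ineq3]) (use n in simp)
  finally show "\<bar>1 / (sqrt (1 - (norm x)\<^sup>2))^3 - 1 / (sqrt (1 - (norm y)\<^sup>2))^3\<bar> \<le> (3 * (2 * sqrt n)^5) * norm (x - y)" .
  note sb = sig_bounds[OF n norm_ge_zero y]
  have "(1 / sqrt (1 - (norm y)\<^sup>2))^3 \<le> (2 * sqrt n)^3"
    by (rule power_mono) (use sb in auto)
  then show "\<bar>1 / (sqrt (1 - (norm y)\<^sup>2))^3\<bar> \<le> (2 * sqrt n)^3"
    using sb(1) by (simp add: power_divide)
qed



lemma perk:
  fixes A :: "real^'p^'m" and b :: "real^'p" and x y :: "real^'m"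
  defines "n \<equiv> real CARD('m) + 1"
  defines "K \<equiv> sqrt (real CARD('m)) + sqrt (4*n-1)"
  defines "M \<equiv> maxabs A b"
  assumes x: "norm x < sqrt ((4*n-1)/(4*n))" "r \<le> norm x" and y: "norm y < sqrt ((4*n-1)/(4*n))" "r \<le> norm y"
    and r: "r > 0" and mu: "\<mu> > 0"
  shows "\<bar>(h2 \<mu> (zz A b k x) * (cc A b k x)\<^sup>2 - h1 \<mu> (zz A b k x) * b$k / (sqrt (1 - (norm x)\<^sup>2))^3)
         - (h2 \<mu> (zz A b k y) * (cc A b k y)\<^sup>2 - h1 \<mu> (zz A b k y) * b$k / (sqrt (1 - (norm y)\<^sup>2))^3)\<bar>
     \<le> ((1/\<mu>) * (2 * (K*M)) * (sqrt (real CARD('m)) * M / r + (2 * sqrt n)^3 * M) + (K*M)^2 * (2/\<mu>^2 * (K*M))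
        + (M * (3 * (2 * sqrt n)^5) + M * (2 * sqrt n)^3 * ((1/\<mu>) * (K*M)))) * norm (x - y)"
proof -
  have x0: "x \<noteq> 0" "y \<noteq> 0" using x y r by auto
  have zl: "\<bar>zz A b k x - zz A b k y\<bar> \<le> (K * M) * norm (x - y)"
    using zz_lip[OF x(1)[unfolded n_def] y(1)[unfolded n_def], of A b k] unfolding K_def M_def n_def by simp
  have T1: "\<bar>h2 \<mu> (zz A b k x) * (cc A b k x)\<^sup>2 - h2 \<mu> (zz A b k y) * (cc A b k y)\<^sup>2\<bar>
      \<le> ((1/\<mu>) * (2 * (K*M)) * (sqrt (real CARD('m)) * M / r + (2 * sqrt n)^3 * M) + (K*M)^2 * (2/\<mu>^2 * (K*M))) * norm (x - y)"
  proof (rule comb1)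
    show "\<bar>h2 \<mu> (zz A b k x)\<bar> \<le> 1/\<mu>" by (rule h2_bd[OF mu])
    have "\<bar>h2 \<mu> (zz A b k x) - h2 \<mu> (zz A b k y)\<bar> \<le> (2/\<mu>^2) * \<bar>zz A b k x - zz A b k y\<bar>" by (rule h2_lip[OF mu])
    also have "\<dots> \<le> (2/\<mu>^2) * ((K * M) * norm (x - y))" by (rule mult_left_mono[OF zl]) simp
    finally show "\<bar>h2 \<mu> (zz A b k x) - h2 \<mu> (zz A b k y)\<bar> \<le> 2/\<mu>^2 * (K * M) * norm (x - y)" by (simp add: algebra_simps)
    show "\<bar>cc A b k x\<bar> \<le> K * M" using cc_bound[OF x(1)[unfolded n_def] x0(1), of A b k] unfolding K_def M_def n_def by simp
    show "\<bar>cc A b k y\<bar> \<le> K * M" using cc_bound[OF y(1)[unfolded n_def] x0(2), of A b k] unfolding K_def M_def n_def by simp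
    show "\<bar>cc A b k x - cc A b k y\<bar> \<le> (sqrt (real CARD('m)) * M / r + (2 * sqrt n)^3 * M) * norm (x - y)"
      using cc_lip[OF x[unfolded n_def] y[unfolded n_def] r, of A b k] unfolding M_def n_def by simp
  qed
  have T2: "\<bar>h1 \<mu> (zz A b k x) * b$k * (1 / (sqrt (1 - (norm x)\<^sup>2))^3) - h1 \<mu> (zz A b k y) * b$k * (1 / (sqrt (1 - (norm y)\<^sup>2))^3)\<bar>
      \<le> (M * (3 * (2 * sqrt n)^5) + M * (2 * sqrt n)^3 * ((1/\<mu>) * (K*M))) * norm (x - y)"
  proof (rule comb2)
    show "\<bar>h1 \<mu> (zz A b k x)\<bar> \<le> 1" by (rule h1_bd)
    have "\<bar>h1 \<mu> (zz A b k x) - h1 \<mu> (zz A b k y)\<bar> \<le> (1/\<mu>) * \<bar>zz A b k x - zz A b k y\<bar>" by (rule h1_lip[OF mu])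
    also have "\<dots> \<le> (1/\<mu>) * ((K * M) * norm (x - y))" by (rule mult_left_mono[OF zl]) (use mu in simp)
    finally show "\<bar>h1 \<mu> (zz A b k x) - h1 \<mu> (zz A b k y)\<bar> \<le> 1/\<mu> * (K * M) * norm (x - y)" by (simp add: algebra_simps)
    show "\<bar>b$k\<bar> \<le> M" unfolding M_def by (rule maxabs_bounds(2))
    show "\<bar>1 / (sqrt (1 - (norm x)\<^sup>2))^3 - 1 / (sqrt (1 - (norm y)\<^sup>2))^3\<bar> \<le> (3 * (2 * sqrt n)^5) * norm (x - y)"
      using P_lip(1)[OF x(1)[unfolded n_def] y(1)[unfolded n_def]] unfolding n_def by simp
    show "\<bar>1 / (sqrt (1 - (norm y)\<^sup>2))^3\<bar> \<le> (2 * sqrt n)^3"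
      using P_lip(2)[OF x(1)[unfolded n_def] y(1)[unfolded n_def]] unfolding n_def by simp
  qed
  have e: "h1 \<mu> (zz A b k z) * b$k / (sqrt (1 - (norm z)\<^sup>2))^3 = h1 \<mu> (zz A b k z) * b$k * (1 / (sqrt (1 - (norm z)\<^sup>2))^3)" for z :: "real^'m"
    by simp
  have tri: "\<bar>(p1 - q1) - (p2 - q2)\<bar> \<le> \<bar>p1 - p2\<bar> + \<bar>q1 - q2\<bar>" for p1 q1 p2 q2 :: real
    by linarith
  define B1 where "B1 = (1/\<mu>) * (2 * (K*M)) * (sqrt (real CARD('m)) * M / r + (2 * sqrt n)^3 * M) + (K*M)^2 * (2/\<mu>^2 * (K*M))"
  define B2 where "B2 = M * (3 * (2 * sqrt n)^5) + M * (2 * sqrt n)^3 * ((1/\<mu>) * (K*M))"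
  have "\<bar>(h2 \<mu> (zz A b k x) * (cc A b k x)\<^sup>2 - h1 \<mu> (zz A b k x) * b$k * (1 / (sqrt (1 - (norm x)\<^sup>2))^3))
         - (h2 \<mu> (zz A b k y) * (cc A b k y)\<^sup>2 - h1 \<mu> (zz A b k y) * b$k * (1 / (sqrt (1 - (norm y)\<^sup>2))^3))\<bar>
      \<le> B1 * norm (x - y) + B2 * norm (x - y)"
    unfolding B1_def B2_def by (rule order_trans[OF tri add_mono[OF T1 T2]])
  also have "\<dots> = (B1 + B2) * norm (x - y)" by (rule distrib_right[symmetric])
  finally show ?thesis unfolding e B1_def B2_def by (simp only: add.assoc)
qed



lemma K_le:
  fixes d :: real assumes d: "d \<ge> 1"
  shows "sqrt d + sqrt (4*(d+1)-1) \<le> 2*(d+1)"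
proof -
  have a: "(sqrt d)^2 = d" using d by simp
  have c: "(sqrt (4*(d+1)-1))^2 = 4*(d+1)-1" using d by simp
  have am: "2 * (sqrt d * sqrt (4*(d+1)-1)) \<le> (sqrt d)^2 + (sqrt (4*(d+1)-1))^2"
    using sum_squares_bound[of "sqrt d" "sqrt (4*(d+1)-1)"] by (simp add: power2_eq_square)
  have "(sqrt d + sqrt (4*(d+1)-1))^2 = (sqrt d)^2 + (sqrt (4*(d+1)-1))^2 + 2 * (sqrt d * sqrt (4*(d+1)-1))"
    by (simp add: power2_eq_square algebra_simps)
  also have "\<dots> \<le> (d + (4*(d+1)-1)) + (d + (4*(d+1)-1))" unfolding a c by (rule add_left_mono[OF am[unfolded a c]])
  also have "\<dots> = 2 * (d + (4*(d+1)-1))" by simp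
  also have "\<dots> \<le> (2*(d+1))^2"
  proof -
    have "0 \<le> (d - 1) * (4*d+2)" using d by simp
    then show ?thesis by (simp add: power2_eq_square algebra_simps)
  qed
  finally show ?thesis by (rule power2_le_imp_le) (use d in simp)
qed

lemma FF_lip:
  fixes A :: "real^'p^'m" and b :: "real^'p" and x y :: "real^'m"
  defines "n \<equiv> real CARD('m) + 1"
  defines "K \<equiv> sqrt (real CARD('m)) + sqrt (4*n-1)"
  defines "M \<equiv> maxabs A b"
  assumes x: "norm x < sqrt ((4*n-1)/(4*n))" "r \<le> norm x" and y: "norm y < sqrt ((4*n-1)/(4*n))" "r \<le> norm y"
    and r: "r > 0" and mu: "\<mu> > 0"
  shows "\<bar>FF \<mu> A b x - FF \<mu> A b y\<bar>
     \<le> ((1/\<mu>) * (2 * (K*M)) * (sqrt (real CARD('m)) * M / r + (2 * sqrt n)^3 * M) + (K*M)^2 * (2/\<mu>^2 * (K*M))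
        + (M * (3 * (2 * sqrt n)^5) + M * (2 * sqrt n)^3 * ((1/\<mu>) * (K*M)))) * norm (x - y)"
    (is "_ \<le> ?L")
proof -
  define T where "T z k = h2 \<mu> (zz A b k z) * (cc A b k z)\<^sup>2 - h1 \<mu> (zz A b k z) * b$k / (sqrt (1 - (norm z)\<^sup>2))^3" for z k
  have Tk: "\<bar>T x k - T y k\<bar> \<le> ?L" for k
    unfolding T_def K_def M_def n_def
    by (rule perk[OF x[unfolded n_def] y[unfolded n_def] r mu])
  have p: "real CARD('p) > 0" by simp
  have "FF \<mu> A b x - FF \<mu> A b y = (1 / real CARD('p)) * (\<Sum>k\<in>UNIV. T x k - T y k)"
    by (simp add: FF_def T_def sum_subtractf right_diff_distrib)
  then have "\<bar>FF \<mu> A b x - FF \<mu> A b y\<bar> = (1 / real CARD('p)) * \<bar>\<Sum>k\<in>UNIV. T x k - T y k\<bar>"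
    by (simp add: abs_mult)
  also have "\<dots> \<le> (1 / real CARD('p)) * (\<Sum>k\<in>(UNIV::'p set). ?L)"
    by (rule mult_left_mono[OF order_trans[OF sum_abs sum_mono[OF Tk]]]) simp
  also have "\<dots> = ?L" using p by simp
  finally show ?thesis .
qed

lemma final_bound:
  fixes n d \<mu> r M :: real
  assumes d: "d \<ge> 1" and n: "n = d + 1" and mu: "\<mu> > 0" and r: "r > 0" "r < 1" and M: "M \<ge> 0"
  defines "K \<equiv> sqrt d + sqrt (4*n-1)"
  shows "(1/\<mu>) * (2 * (K*M)) * (sqrt d * M / r + (2 * sqrt n)^3 * M) + (K*M)^2 * (2/\<mu>^2 * (K*M))
        + (M * (3 * (2 * sqrt n)^5) + M * (2 * sqrt n)^3 * ((1/\<mu>) * (K*M)))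
     \<le> 16 * n ^ 3 / \<mu>\<^sup>2 * M ^ 3
               + 8 * n powr (3/2) / (\<mu> * r) * M\<^sup>2
               + 48 * n powr (5/2) / \<mu> * M\<^sup>2
               + 96 * n powr (5/2) * M"
proof -
  define q where "q = sqrt n"
  have n1: "n \<ge> 2" using d n by simp
  have q0: "q \<ge> 0" and qq: "q^2 = n" using n1 by (auto simp: q_def)
  have K0: "0 \<le> K" unfolding K_def using n d by simp
  have K: "K \<le> 2*n" "0 \<le> K" using K_le[OF d] n K0 by (auto simp: K_def)
  have sd: "sqrt d \<le> q" "0 \<le> sqrt d" using n d by (auto simp: q_def)
  have p3: "n powr (3/2) = q^3" using n1 powr_power[of n "1/2" 3] by (simp add: q_def powr_half_sqrt)
  have p5: "n powr (5/2) = q^5" using n1 powr_power[of n "1/2" 5] by (simp add: q_def powr_half_sqrt)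
  have n3: "n^3 = q^6" unfolding qq[symmetric] by (simp add: power_mult[symmetric])
  have Kq: "K \<le> 2*q^2" using K qq by simp
  have e3: "(2 * sqrt n)^3 = 8*q^3" by (simp add: q_def power_mult_distrib)
  have e5: "(2 * sqrt n)^5 = 32*q^5" by (simp add: q_def power_mult_distrib)
  have lhs: "(1/\<mu>) * (2 * (K*M)) * (sqrt d * M / r + (2 * sqrt n)^3 * M) + (K*M)^2 * (2/\<mu>^2 * (K*M))
        + (M * (3 * (2 * sqrt n)^5) + M * (2 * sqrt n)^3 * ((1/\<mu>) * (K*M)))
      = (2 * K * sqrt d) * (M^2 / (\<mu> * r)) + (24 * K * q^3) * (M^2 / \<mu>) + (2 * K^3) * (M^3 / \<mu>^2) + 96 * q^5 * M"
    unfolding e3 e5 using mu r by (simp add: field_simps power2_eq_square power3_eq_cube)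
  have rhs: "16 * n ^ 3 / \<mu>\<^sup>2 * M ^ 3 + 8 * n powr (3/2) / (\<mu> * r) * M\<^sup>2 + 48 * n powr (5/2) / \<mu> * M\<^sup>2 + 96 * n powr (5/2) * M
      = (8 * q^3) * (M^2 / (\<mu> * r)) + (48 * q^5) * (M^2 / \<mu>) + (16 * q^6) * (M^3 / \<mu>^2) + 96 * q^5 * M"
    unfolding p3 p5 n3 by (simp add: field_simps)
  have c1: "2 * K * sqrt d \<le> 8 * q^3"
  proof -
    have "2 * K * sqrt d \<le> 2 * (2*q^2) * q" by (intro mult_mono Kq sd) (use K q0 in auto)
    also have "\<dots> \<le> 8 * q^3" using q0 by (simp add: power3_eq_cube power2_eq_square)
    finally show ?thesis .
  qed
  have c2: "24 * K * q^3 \<le> 48 * q^5"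
  proof -
    have "24 * K * q^3 \<le> 24 * (2*q^2) * q^3" by (intro mult_right_mono) (use Kq q0 in auto)
    then show ?thesis by (simp add: eval_nat_numeral)
  qed
  have c3: "2 * K^3 \<le> 16 * q^6"
  proof -
    have "K^3 \<le> (2*q^2)^3" by (rule power_mono[OF Kq K(2)])
    then show ?thesis by (simp add: eval_nat_numeral)
  qed
  have m1: "0 \<le> M^2 / (\<mu> * r)" "0 \<le> M^2 / \<mu>" "0 \<le> M^3 / \<mu>^2" using mu r M by auto
  show ?thesis unfolding lhs rhs
    using mult_right_mono[OF c1 m1(1)] mult_right_mono[OF c2 m1(2)] mult_right_mono[OF c3 m1(3)]
    by linarith
qed



theorem mainTheorem11:
  fixes \<mu> r :: real and A :: "real^'p^'m" and b :: "real^'p"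
  assumes "\<mu> > 0" and "0 < r" and "r < 1"
  defines "n \<equiv> real CARD('m) + 1"
  shows "\<exists>L. lipschitz_on L
            {w :: real^'m. norm w < sqrt ((4 * n - 1) / (4 * n)) \<and> norm w \<ge> r}
            (\<lambda>w. (w \<bullet> (hessian (gfun \<mu> A b) w *v w)) / (norm w)\<^sup>2)
          \<and> L \<le> 16 * n ^ 3 / \<mu>\<^sup>2 * maxabs A b ^ 3
               + 8 * n powr (3/2) / (\<mu> * r) * (maxabs A b)\<^sup>2
               + 48 * n powr (5/2) / \<mu> * (maxabs A b)\<^sup>2
               + 96 * n powr (5/2) * maxabs A b"
proof -
  note mu = assms(1) and r = assms(2,3)
  define M where "M = maxabs A b"
  define Lt where "Lt = 16 * n ^ 3 / \<mu>\<^sup>2 * M ^ 3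
               + 8 * n powr (3/2) / (\<mu> * r) * M\<^sup>2
               + 48 * n powr (5/2) / \<mu> * M\<^sup>2
               + 96 * n powr (5/2) * M"
  define K where "K = sqrt (real CARD('m)) + sqrt (4*n-1)"
  define L0 where "L0 = (1/\<mu>) * (2 * (K*M)) * (sqrt (real CARD('m)) * M / r + (2 * sqrt n)^3 * M) + (K*M)^2 * (2/\<mu>^2 * (K*M))
        + (M * (3 * (2 * sqrt n)^5) + M * (2 * sqrt n)^3 * ((1/\<mu>) * (K*M)))"
  have M0: "0 \<le> M" unfolding M_def by (rule maxabs_bounds(3))
  have n2: "n \<ge> 2" unfolding n_def by simp
  have LL: "L0 \<le> Lt"
    unfolding L0_def Lt_def K_def
    by (rule final_bound[of "real CARD('m)" n \<mu> r M]) (use mu r M0 n_def in auto)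
  have Lt0: "0 \<le> Lt" unfolding Lt_def using mu r M0 n2 by simp
  have R1: "sqrt ((4 * n - 1) / (4 * n)) \<le> 1" using n2 by simp
  have lip: "lipschitz_on Lt {w :: real^'m. norm w < sqrt ((4 * n - 1) / (4 * n)) \<and> norm w \<ge> r}
            (\<lambda>w. (w \<bullet> (hessian (gfun \<mu> A b) w *v w)) / (norm w)\<^sup>2)"
  proof (rule lipschitz_onI[OF _ Lt0])
    fix x y assume x: "x \<in> {w :: real^'m. norm w < sqrt ((4 * n - 1) / (4 * n)) \<and> norm w \<ge> r}"
      and y: "y \<in> {w :: real^'m. norm w < sqrt ((4 * n - 1) / (4 * n)) \<and> norm w \<ge> r}"
    have xx: "norm x < sqrt ((4 * n - 1) / (4 * n))" "r \<le> norm x" using x by auto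
    have yy: "norm y < sqrt ((4 * n - 1) / (4 * n))" "r \<le> norm y" using y by auto
    have x1: "norm x < 1" using xx(1) R1 by linarith
    have y1: "norm y < 1" using yy(1) R1 by linarith
    have fx: "(x \<bullet> (hessian (gfun \<mu> A b) x *v x)) / (norm x)\<^sup>2 = FF \<mu> A b x"
      by (rule rayleigh) (use x1 xx r mu in auto)
    have fy: "(y \<bullet> (hessian (gfun \<mu> A b) y *v y)) / (norm y)\<^sup>2 = FF \<mu> A b y"
      by (rule rayleigh) (use y1 yy r mu in auto)
    have "\<bar>FF \<mu> A b x - FF \<mu> A b y\<bar> \<le> L0 * norm (x - y)"
      unfolding L0_def K_def M_def n_def
      by (rule FF_lip[OF xx[unfolded n_def] yy[unfolded n_def] r(1) mu])
    also have "\<dots> \<le> Lt * norm (x - y)" by (rule mult_right_mono[OF LL]) simp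
    finally show "dist ((x \<bullet> (hessian (gfun \<mu> A b) x *v x)) / (norm x)\<^sup>2) ((y \<bullet> (hessian (gfun \<mu> A b) y *v y)) / (norm y)\<^sup>2)
        \<le> Lt * dist x y"
      unfolding fx fy by (simp add: dist_real_def dist_norm)
  qed
  show ?thesis
    by (rule exI[of _ Lt]) (use lip in \<open>simp add: Lt_def M_def\<close>)
qed

end
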